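(* Let $K$ be a field of odd characteristic $p$ with algebraic closure $\bar K$. Suppose that $f\in K[X]$ satisfies $f\sim_{\bar K} X^p-2X^{(p+1)/2}+X$. Then $f\sim_K X^p-2aX^{(p+1)/2}+a^2X$ for some $a\in K$.
   Context: For a field extension $E$ of $K$ and $f,h\in K[X]$ (or $h\in E[X]$), write $f\sim_E h$ if there are polynomials $L,R\in E[X]$ of degree $1$ with $f(X)=L(h(R(X)))$. *)

theory Defs
  imports "HOL-Computational_Algebra.Polynomial" "HOL-Algebra.Algebraic_Closure_Type"
begin

text \<open>f ~_E h: there are degree-1 polynomials L, R over E with f = L(h(R(X))).
  Here both polynomials are taken over the field E itself; the K-polynomials are
  mapped into E via the field embedding.\<close>
definition lin_equiv :: "'a::field poly \<Rightarrow> 'a poly \<Rightarrow> bool" where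
  "lin_equiv f h \<longleftrightarrow>
     (\<exists>L R. degree L = 1 \<and> degree R = 1 \<and> f = pcompose L (pcompose h R))"

end

theory Submission
  imports Defs
begin

lemma map_ac_add: fixes p q :: "'a::field poly" shows "map_poly to_ac (p + q) = map_poly to_ac p + map_poly to_ac q"
  by (simp add: poly_eq_iff coeff_map_poly)
lemma map_ac_diff: fixes p q :: "'a::field poly" shows "map_poly to_ac (p - q) = map_poly to_ac p - map_poly to_ac q"
  by (simp add: poly_eq_iff coeff_map_poly)
lemma map_ac_mult: fixes p q :: "'a::field poly" shows "map_poly to_ac (p * q) = map_poly to_ac p * map_poly to_ac q"
  by (simp add: poly_eq_iff coeff_map_poly coeff_mult to_ac_sum)
lemma map_ac_pCons: fixes p :: "'a::field poly" shows "map_poly to_ac (pCons c p) = pCons (to_ac c) (map_poly to_ac p)"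
  by (rule map_poly_pCons) simp
lemma map_ac_pcompose: fixes p q :: "'a::field poly" shows
  "map_poly to_ac (pcompose p q) = pcompose (map_poly to_ac p) (map_poly to_ac q)"
  by (induction p) (simp_all add: pcompose_pCons map_ac_add map_ac_mult map_ac_pCons)
lemma map_ac_inj: fixes p q :: "'a::field poly" shows "map_poly to_ac p = map_poly to_ac q \<Longrightarrow> p = q"
  by (simp add: poly_eq_iff coeff_map_poly)

lemma rng_div: fixes x y :: "'a::field alg_closure" shows "x \<in> range to_ac \<Longrightarrow> y \<in> range to_ac \<Longrightarrow> x / y \<in> range to_ac"
  by (elim rangeE) (simp flip: to_ac_divide)
lemma rng_mult: fixes x y :: "'a::field alg_closure" shows "x \<in> range to_ac \<Longrightarrow> y \<in> range to_ac \<Longrightarrow> x * y \<in> range to_ac"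
  by (elim rangeE) (simp flip: to_ac_mult)
lemma rng_add: fixes x y :: "'a::field alg_closure" shows "x \<in> range to_ac \<Longrightarrow> y \<in> range to_ac \<Longrightarrow> x + y \<in> range to_ac"
  by (elim rangeE) (simp flip: to_ac_add)
lemma rng_minus: fixes x :: "'a::field alg_closure" shows "x \<in> range to_ac \<Longrightarrow> - x \<in> range to_ac"
  by (elim rangeE) (simp flip: to_ac_minus)
lemma rng_of_nat: "(of_nat n :: 'a::field alg_closure) \<in> range (to_ac :: 'a \<Rightarrow> _)"
  by (simp flip: to_ac_of_nat)

lemma pcompose_monom1: "pcompose (monom 1 n) (R::'b::comm_ring_1 poly) = R ^ n"
proof (induction n)
  case 0 then show ?case by (simp add: monom_0 one_pCons)
next
  case (Suc n)
  have "monom (1::'b) (Suc n) = [:0,1:] * monom 1 n"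
    by (simp add: monom_Suc)
  then show ?case using Suc by (simp add: pcompose_mult pcompose_pCons)
qed

lemma deg1_form:
  assumes "degree L = 1"
  shows "L = [:coeff L 0, coeff L 1:]"
proof (rule poly_eqI)
  fix n show "coeff L n = coeff [:coeff L 0, coeff L 1:] n"
    using assms by (cases n; cases "n - 1") (auto simp: coeff_eq_0)
qed

lemma coeff_lin_power:
  fixes s r :: "'b::comm_ring_1"
  shows "coeff ([:s,r:] ^ n) n = r ^ n \<and> coeff ([:s,r:] ^ n) (Suc n) = 0
     \<and> coeff ([:s,r:] ^ Suc n) n = of_nat (Suc n) * s * r ^ n"
proof (induction n)
  case 0 then show ?case by simp
next
  case (Suc n)
  have deg: "degree ([:s,r:] ^ n) \<le> n"
    by (rule order.trans[OF degree_power_le]) (simp add: degree_pCons_le)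
  have d2: "coeff ([:s,r:] ^ n) (Suc (Suc n)) = 0"
    using deg by (intro coeff_eq_0) simp
  have e: "\<And>P k. coeff ([:s,r:] * P) (Suc k) = s * coeff P (Suc k) + r * coeff P k"
    by simp
  have A: "coeff ([:s,r:] ^ Suc n) (Suc n) = r ^ Suc n"
    using Suc e[of "[:s,r:]^n" n] by simp
  have B: "coeff ([:s,r:] ^ Suc n) (Suc (Suc n)) = 0"
    using Suc e[of "[:s,r:]^n" "Suc n"] d2 by simp
  have C: "coeff ([:s,r:] ^ Suc (Suc n)) (Suc n) = of_nat (Suc (Suc n)) * s * r ^ Suc n"
    using Suc e[of "[:s,r:]^Suc n" n] A
    by (simp only: power_Suc[of "[:s,r:]" "Suc n"]) (simp add: algebra_simps)
  show ?case using A B C by simp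
qed

theorem lemma2p9:
  fixes f :: "'a::field poly" and p :: nat
  assumes "CHAR('a) = p" and "odd p"
    and "lin_equiv (map_poly to_ac f)
           (monom 1 p - monom 2 ((p + 1) div 2) + monom 1 1 :: 'a alg_closure poly)"
  shows "\<exists>a::'a. lin_equiv f (monom 1 p - monom (2 * a) ((p + 1) div 2) + monom (a^2) 1)"
proof -
  define q where "q = (p + 1) div 2"
  define m where "m = (p - 1) div 2"
  have p1: "p \<noteq> 1"
  proof
    assume "p = 1"
    then have "of_nat 1 = (0::'a)" using assms(1) of_nat_CHAR by metis
    then show False by simp
  qed
  have pm: "p = 2 * m + 1" and qm: "q = m + 1" and m1: "m \<ge> 1"
    using assms(2) p1 unfolding m_def q_def by (auto elim!: oddE)
  have charK: "CHAR('a alg_closure) = p" using assms(1) by simp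
  have ofnat0: "(of_nat k :: 'a alg_closure) = 0 \<longleftrightarrow> p dvd k" for k
    using of_nat_eq_0_iff_char_dvd[where 'a="'a alg_closure"] charK by simp
  have ofp: "(of_nat p :: 'a alg_closure) = 0" using ofnat0 by simp
  have ofm: "(of_nat m :: 'a alg_closure) \<noteq> 0"
    using ofnat0[of m] m1 pm by (auto dest: dvd_imp_le)
  have of2: "(2 :: 'a alg_closure) \<noteq> 0"
  proof
    assume "(2 :: 'a alg_closure) = 0"
    then have "(of_nat 2 :: 'a alg_closure) = 0" by simp
    then have "p dvd 2" using ofnat0 by blast
    then have "p \<le> 2" by (rule dvd_imp_le) simp
    then show False using assms(2) p1 by presburger
  qed
  define F where "F = map_poly to_ac f"
  define h :: "'a alg_closure poly" where "h = monom 1 p - monom 2 q + monom 1 1"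
  obtain L R where degL: "degree L = 1" and degR: "degree R = 1"
    and FLR: "F = pcompose L (pcompose h R)"
    using assms(3) unfolding lin_equiv_def F_def h_def q_def by blast
  define u where "u = coeff L 1"
  define v where "v = coeff L 0"
  define r where "r = coeff R 1"
  define s where "s = coeff R 0"
  have Lf: "L = [:v, u:]" using deg1_form[OF degL] u_def v_def by simp
  have Rf: "R = [:s, r:]" using deg1_form[OF degR] r_def s_def by simp
  have u0: "u \<noteq> 0" using degL Lf by auto
  have r0: "r \<noteq> 0" using degR Rf by auto
  have inK: "\<And>k. coeff F k \<in> range to_ac"
    unfolding F_def by (simp add: coeff_map_poly)
  have coeffh: "coeff h k = (if k = p then 1 else 0) - (if k = q then 2 else 0) + (if k = 1 then 1 else 0)" for k
    unfolding h_def by (simp add: coeff_monom)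
  have neqs: "q \<noteq> p" "1 \<noteq> p" "1 \<noteq> q" "0 \<noteq> p" "0 \<noteq> q" "q < p" "1 < p" using pm qm m1 by auto
  have degh: "degree h = p"
  proof (rule antisym)
    show "degree h \<le> p" by (rule degree_le) (use neqs in \<open>auto simp: coeffh\<close>)
    have "coeff h p = 1" using neqs by (simp add: coeffh)
    then show "p \<le> degree h" by (intro le_degree) simp
  qed
  have lch: "lead_coeff h = 1" using degh neqs by (simp add: coeffh)
  have degF: "degree F = p" unfolding FLR using degL degR degh
    by (simp add: degree_pcompose)
  have cF: "coeff F p = u * r ^ p"
  proof -
    have "lead_coeff (pcompose h R) = r ^ p"
      using lead_coeff_comp[of R h] degR degh lch Rf by simp
    moreover have "degree (pcompose h R) = p" using degR degh by (simp add: degree_pcompose)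
    ultimately have "lead_coeff F = u * (r ^ p) ^ 1"
      unfolding FLR using lead_coeff_comp[of "pcompose h R" L] degL Lf neqs by simp
    then show ?thesis using degF by simp
  qed
  have ph: "pderiv h = 1 - monom 1 m"
  proof -
    have "(of_nat q * 2 :: 'a alg_closure) = of_nat (2 * q)" by simp
    also have "2 * q = p + 1" using pm qm by simp
    finally have "(of_nat q * 2 :: 'a alg_closure) = 1" using ofp by simp
    then show ?thesis unfolding h_def using ofp qm
      by (simp add: pderiv_monom pderiv_add pderiv_diff monom_0 one_pCons)
  qed
  have pF: "pderiv F = smult (u * r) (1 - R ^ m)"
  proof -
    have "pderiv R = [:r:]" unfolding Rf by (simp add: pderiv_pCons)
    moreover have "pderiv L = [:u:]" unfolding Lf by (simp add: pderiv_pCons)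
    ultimately have "pderiv F = [:u:] * ((1 - R ^ m) * [:r:])" unfolding FLR
      by (simp add: pderiv_pcompose ph pcompose_diff pcompose_1 pcompose_monom1)
    also have "\<dots> = smult (u * r) (1 - R ^ m)"
      by (simp add: poly_eq_iff mult_ac)
    finally show ?thesis .
  qed
  have cR: "coeff (R^m) m = r^m" "coeff (R^m) (m-1) = of_nat m * s * r^(m-1)"
    using coeff_lin_power[of s r m] coeff_lin_power[of s r "m-1"] m1 unfolding Rf by simp_all
  have dm: "coeff (pderiv F) m = -(u*r*r^m)"
    using m1 cR by (simp add: pF)
  have dm1: "coeff (pderiv F) (m-1) = u*r*((if m = 1 then 1 else 0) - of_nat m * s * r^(m-1))"
    using m1 cR by (simp add: pF coeff_1)
  have dK: "coeff (pderiv F) k \<in> range to_ac" for k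
    unfolding coeff_pderiv by (intro rng_mult rng_of_nat inK)
  have rpow: "r^m = r * r^(m-1)" using m1 by (metis Suc_diff_1 less_le_trans zero_less_one power_Suc)
  obtain tt where ttK: "tt \<in> range to_ac" and tts: "tt * r = s"
  proof (cases "m = 1")
    case True
    then have p3: "p = 3" using pm by simp
    define tt where "tt = - coeff (pderiv F) m / coeff F p + coeff (pderiv F) (m-1) / coeff (pderiv F) m"
    have "tt \<in> range to_ac" unfolding tt_def by (intro rng_add rng_div rng_minus dK inK)
    moreover have "tt * r = s" unfolding tt_def dm dm1 cF using True p3 u0 r0
      by (simp add: field_simps power3_eq_cube)
    ultimately show ?thesis using that by blast
  next
    case False
    define tt where "tt = coeff (pderiv F) (m-1) / (of_nat m * coeff (pderiv F) m)"
    have "tt \<in> range to_ac" unfolding tt_def by (intro rng_mult rng_div rng_of_nat dK)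
    moreover have "tt * r = s" unfolding tt_def dm dm1 rpow using False u0 r0 ofm
      by (simp add: field_simps)
    ultimately show ?thesis using that by blast
  qed
  obtain T where T: "to_ac T = tt" using ttK by blast
  define G where "G = pcompose F [:-tt, 1:]"
  have GF: "F = pcompose G [:tt, 1:]"
  proof -
    have "pcompose [:-tt, 1:] [:tt, 1:] = [:0, 1:]" by (simp add: pcompose_pCons)
    then show ?thesis unfolding G_def by (simp flip: pcompose_assoc)
  qed
  have RG: "pcompose R [:-tt, 1:] = [:0, r:]"
    unfolding Rf using tts by (simp add: pcompose_pCons algebra_simps)
  have Gc: "coeff G k = (if k = 0 then v else 0) + u * (r^k * coeff h k)" for k
  proof -
    have "G = pcompose L (pcompose h [:0, r:])"
      unfolding G_def FLR by (simp flip: pcompose_assoc add: RG)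
    then show ?thesis unfolding Lf by (simp add: pcompose_pCons coeff_pcompose_linear mult_ac coeff_pCons split: nat.split)
  qed
  have GK: "coeff G k \<in> range to_ac" for k
  proof -
    have "G = map_poly to_ac (pcompose f [:-T, 1:])"
      unfolding G_def F_def by (simp add: map_ac_pcompose map_ac_pCons T)
    then show ?thesis by (simp add: coeff_map_poly)
  qed
  define A' where "A' = u * r^p"
  define B' where "B' = u * r^q"
  have A'0: "A' \<noteq> 0" unfolding A'_def using u0 r0 by simp
  have vK: "v \<in> range to_ac" using GK[of 0] Gc[of 0] neqs by (simp add: coeffh)
  have A'K: "A' \<in> range to_ac" using GK[of p] Gc[of p] neqs by (simp add: coeffh A'_def)
  have B'K: "B' \<in> range to_ac"
  proof -
    have "B' = - coeff G q / of_nat 2" using Gc[of q] neqs of2 by (simp add: coeffh B'_def)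
    then show ?thesis by (simp only:) (intro rng_div rng_minus GK rng_of_nat)
  qed
  obtain A B V where AB: "to_ac A = A'" "to_ac B = B'" "to_ac V = v"
    using A'K B'K vK by blast
  have hpow: "r^q * r^q = r^p * r" using pm qm by (simp flip: power_add add: mult_2)
  have k1: "A' * (B'/A')^2 = u * r"
  proof -
    have "B'^2 = u * r * A'" unfolding B'_def A'_def
      using hpow by (simp add: power2_eq_square mult_ac)
    then show ?thesis using A'0 by (simp add: power2_eq_square field_simps)
  qed
  have k2: "A' * (2 * (B'/A')) = 2 * B'" using A'0 by simp
  define ha where "ha = monom 1 p - monom (2 * (B'/A')) q + monom ((B'/A')^2) 1"
  have rc: "coeff (pcompose [:v, A':] P) k = (if k = 0 then v else 0) + A' * coeff P k" for P k
    by (simp add: pcompose_pCons coeff_pCons mult_ac split: nat.split)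
  have hac: "coeff ha k = (if k = p then 1 else 0) - (if k = q then 2 * (B'/A') else 0)
      + (if k = 1 then (B'/A')^2 else 0)" for k
    unfolding ha_def by (simp add: coeff_monom)
  have e: "u * (r^k * coeff h k) = A' * coeff ha k" for k
  proof -
    consider "k = p" | "k = q" | "k = 1" | "k \<noteq> p" "k \<noteq> q" "k \<noteq> 1" by blast
    then show ?thesis
    proof cases
      case 1 then show ?thesis using neqs by (simp add: coeffh hac A'_def)
    next
      case 2
      then have "coeff h k = - 2" "coeff ha k = - (2 * (B'/A'))" using neqs by (simp_all add: coeffh hac)
      then show ?thesis using k2 2 by (simp add: B'_def)
    next
      case 3
      then have "coeff h k = 1" "coeff ha k = (B'/A')^2" using neqs by (simp_all add: coeffh hac)
      then show ?thesis using k1 3 by simp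
    next
      case 4
      then show ?thesis by (simp add: coeffh hac)
    qed
  qed
  have key: "G = pcompose [:v, A':] ha"
    by (rule poly_eqI) (simp add: Gc rc e)
  show ?thesis
  proof (intro exI[of _ "B/A"])
    show "lin_equiv f (monom 1 p - monom (2 * (B/A)) ((p + 1) div 2) + monom ((B/A)^2) 1)"
      unfolding lin_equiv_def
    proof (rule exI[of _ "[:V, A:]"], rule exI[of _ "[:T, 1:]"], intro conjI)
      show "degree [:V, A:] = 1" using A'0 AB by auto
      show "degree [:T, 1:] = 1" by simp
      show "f = pcompose [:V, A:] (pcompose (monom 1 p - monom (2 * (B/A)) ((p + 1) div 2) + monom ((B/A)^2) 1) [:T, 1:])"
      proof (rule map_ac_inj)
        show "map_poly to_ac f = map_poly to_ac (pcompose [:V, A:] (pcompose (monom 1 p - monom (2 * (B/A)) ((p + 1) div 2) + monom ((B/A)^2) 1) [:T, 1:]))"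
          unfolding F_def[symmetric] GF key ha_def
          by (simp add: map_ac_pcompose map_ac_pCons map_ac_add map_ac_diff map_poly_monom AB T
              pcompose_assoc q_def)
      qed
    qed
  qed
qed

end
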